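(* Let $S$ be a $\Gamma$-AG$^{**}$-groupoid. Then $S$ is intra-regular if and only if every right $\Gamma$-ideal of $S$ is $\Gamma$-semiprime.
   Context: Let $S$ and $\Gamma$ be nonempty sets with a map $S\times\Gamma\times S\to S$, $(x,\gamma,y)\mapsto x\gamma y$. $S$ is a $\Gamma$-AG-groupoid if $(x\gamma y)\delta z=(z\gamma y)\delta x$ for all $x,y,z\in S$, $\gamma,\delta\in\Gamma$; it is a $\Gamma$-AG$^{**}$-groupoid if moreover $a\alpha(b\beta c)=b\alpha(a\beta c)$ for all $a,b,c\in S$, $\alpha,\beta\in\Gamma$. For subsets $A,B\subseteq S$, $A\Gamma B=\{a\gamma b: a\in A,\gamma\in\Gamma,b\in B\}$. $S$ is intra-regular if for every $a\in S$ there exist $x,y\in S$ and $\beta,\gamma,\delta\in\Gamma$ with $a=(x\beta(a\delta a))\gamma y$. A nonempty subset $R$ is a right $\Gamma$-ideal if $R\Gamma S\subseteq R$. A subset $P\subseteq S$ is $\Gamma$-semiprime if for every $a\in S$, $a\Gamma a\subseteq P$ implies $a\in P$. *)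

theory Defs
  imports Main
begin

definition gamma_groupoid :: "'a set \<Rightarrow> 'g set \<Rightarrow> ('a \<Rightarrow> 'g \<Rightarrow> 'a \<Rightarrow> 'a) \<Rightarrow> bool" where
  "gamma_groupoid S Gam m \<longleftrightarrow> S \<noteq> {} \<and> Gam \<noteq> {} \<and>
     (\<forall>x\<in>S. \<forall>g\<in>Gam. \<forall>y\<in>S. m x g y \<in> S)"

definition gamma_AG_groupoid :: "'a set \<Rightarrow> 'g set \<Rightarrow> ('a \<Rightarrow> 'g \<Rightarrow> 'a \<Rightarrow> 'a) \<Rightarrow> bool" where
  "gamma_AG_groupoid S Gam m \<longleftrightarrow> gamma_groupoid S Gam m \<and>
     (\<forall>x\<in>S. \<forall>y\<in>S. \<forall>z\<in>S. \<forall>g\<in>Gam. \<forall>d\<in>Gam. m (m x g y) d z = m (m z g y) d x)"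

definition gamma_AG2_groupoid :: "'a set \<Rightarrow> 'g set \<Rightarrow> ('a \<Rightarrow> 'g \<Rightarrow> 'a \<Rightarrow> 'a) \<Rightarrow> bool" where
  "gamma_AG2_groupoid S Gam m \<longleftrightarrow> gamma_AG_groupoid S Gam m \<and>
     (\<forall>a\<in>S. \<forall>b\<in>S. \<forall>c\<in>S. \<forall>al\<in>Gam. \<forall>be\<in>Gam. m a al (m b be c) = m b al (m a be c))"

definition gprod :: "('a \<Rightarrow> 'g \<Rightarrow> 'a \<Rightarrow> 'a) \<Rightarrow> 'a set \<Rightarrow> 'g set \<Rightarrow> 'a set \<Rightarrow> 'a set" where
  "gprod m A Gam B = {m a g b | a g b. a \<in> A \<and> g \<in> Gam \<and> b \<in> B}"

definition intra_regular :: "'a set \<Rightarrow> 'g set \<Rightarrow> ('a \<Rightarrow> 'g \<Rightarrow> 'a \<Rightarrow> 'a) \<Rightarrow> bool" where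
  "intra_regular S Gam m \<longleftrightarrow> (\<forall>a\<in>S. \<exists>x\<in>S. \<exists>y\<in>S. \<exists>be\<in>Gam. \<exists>ga\<in>Gam. \<exists>de\<in>Gam.
     a = m (m x be (m a de a)) ga y)"

definition right_gamma_ideal :: "'a set \<Rightarrow> 'g set \<Rightarrow> ('a \<Rightarrow> 'g \<Rightarrow> 'a \<Rightarrow> 'a) \<Rightarrow> 'a set \<Rightarrow> bool" where
  "right_gamma_ideal S Gam m R \<longleftrightarrow> R \<noteq> {} \<and> R \<subseteq> S \<and> gprod m R Gam S \<subseteq> R"

definition gamma_semiprime :: "'a set \<Rightarrow> 'g set \<Rightarrow> ('a \<Rightarrow> 'g \<Rightarrow> 'a \<Rightarrow> 'a) \<Rightarrow> 'a set \<Rightarrow> bool" where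
  "gamma_semiprime S Gam m P \<longleftrightarrow> (\<forall>a\<in>S. gprod m {a} Gam {a} \<subseteq> P \<longrightarrow> a \<in> P)"

end

theory Submission
  imports Defs
begin

theorem mainTheorem15:
  fixes S :: "'a set" and Gam :: "'g set" and m :: "'a \<Rightarrow> 'g \<Rightarrow> 'a \<Rightarrow> 'a"
  assumes "gamma_AG2_groupoid S Gam m"
  shows "intra_regular S Gam m \<longleftrightarrow>
         (\<forall>R. right_gamma_ideal S Gam m R \<longrightarrow> gamma_semiprime S Gam m R)"
proof -
  have cl: "\<And>x g y. x \<in> S \<Longrightarrow> g \<in> Gam \<Longrightarrow> y \<in> S \<Longrightarrow> m x g y \<in> S"
    and ne: "S \<noteq> {}" "Gam \<noteq> {}"
    using assms unfolding gamma_AG2_groupoid_def gamma_AG_groupoid_def gamma_groupoid_def by auto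
  have Ls: "\<And>x y z g d. x \<in> S \<Longrightarrow> y \<in> S \<Longrightarrow> z \<in> S \<Longrightarrow> g \<in> Gam \<Longrightarrow> d \<in> Gam \<Longrightarrow>
      m (m x g y) d z = m (m z g y) d x"
    using assms unfolding gamma_AG2_groupoid_def gamma_AG_groupoid_def by blast
  have Ag: "\<And>a b c al be. a \<in> S \<Longrightarrow> b \<in> S \<Longrightarrow> c \<in> S \<Longrightarrow> al \<in> Gam \<Longrightarrow> be \<in> Gam \<Longrightarrow>
      m a al (m b be c) = m b al (m a be c)"
    using assms unfolding gamma_AG2_groupoid_def by blast
  have Med: "\<And>p q c e g d al. p \<in> S \<Longrightarrow> q \<in> S \<Longrightarrow> c \<in> S \<Longrightarrow> e \<in> S \<Longrightarrow> g \<in> Gam \<Longrightarrow> d \<in> Gam \<Longrightarrow> al \<in> Gam \<Longrightarrow>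
      m (m p g q) d (m c al e) = m (m p g c) d (m q al e)"
  proof -
    fix p q c e g d al assume h: "p \<in> S" "q \<in> S" "c \<in> S" "e \<in> S" "g \<in> Gam" "d \<in> Gam" "al \<in> Gam"
    have "m (m p g q) d (m c al e) = m (m (m c al e) g q) d p" by (rule Ls) (use h cl in auto)
    also have "m (m c al e) g q = m (m q al e) g c" by (rule Ls) (use h cl in auto)
    also have "m (m (m q al e) g c) d p = m (m p g c) d (m q al e)" by (rule Ls) (use h cl in auto)
    finally show "m (m p g q) d (m c al e) = m (m p g c) d (m q al e)" .
  qed
  show ?thesis
  proof
    assume IR: "intra_regular S Gam m"
    show "\<forall>R. right_gamma_ideal S Gam m R \<longrightarrow> gamma_semiprime S Gam m R"
    proof (intro allI impI)
      fix R assume RI: "right_gamma_ideal S Gam m R"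
      have RS: "R \<subseteq> S" and Rc: "\<And>r g s. r \<in> R \<Longrightarrow> g \<in> Gam \<Longrightarrow> s \<in> S \<Longrightarrow> m r g s \<in> R"
        using RI unfolding right_gamma_ideal_def gprod_def by blast+
      show "gamma_semiprime S Gam m R"
        unfolding gamma_semiprime_def
      proof (intro ballI impI)
        fix a assume aS: "a \<in> S" and sq: "gprod m {a} Gam {a} \<subseteq> R"
        have aa: "\<And>g. g \<in> Gam \<Longrightarrow> m a g a \<in> R" using sq unfolding gprod_def by blast
        obtain x y be ga de where xy: "x \<in> S" "y \<in> S" "be \<in> Gam" "ga \<in> Gam" "de \<in> Gam"
          and eq: "a = m (m x be (m a de a)) ga y"
          using IR aS unfolding intra_regular_def by blast
        define u where "u = m x be (m a de a)"
        have uS: "u \<in> S" using u_def cl xy aS by simp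
        have au: "a = m u ga y" using eq u_def by simp
        have h1: "m a de a = m (m a ga y) de u"
        proof -
          have "m a de a = m (m u ga y) de a" by (simp only: au[symmetric])
          also have "\<dots> = m (m a ga y) de u" by (rule Ls) (use uS xy aS cl in auto)
          finally show ?thesis .
        qed
        have h2: "u = m (m a ga y) be (m x de u)"
        proof -
          have "u = m x be (m (m a ga y) de u)" using u_def h1 by simp
          also have "\<dots> = m (m a ga y) be (m x de u)" by (rule Ag) (use uS xy aS cl in auto)
          finally show ?thesis .
        qed
        define P where "P = m y be (m x de u)"
        have PS: "P \<in> S" using P_def cl xy uS by simp
        define t where "t = m P ga y"
        have tS: "t \<in> S" using t_def cl PS xy by simp
        have h3: "a = m a ga t"
        proof -
          have "a = m (m (m a ga y) be (m x de u)) ga y" using au h2 by simp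
          also have "\<dots> = m P ga (m a ga y)" unfolding P_def by (rule Ls) (use uS xy aS cl in auto)
          also have "\<dots> = m a ga t" unfolding t_def by (rule Ag) (use PS xy aS cl in auto)
          finally show ?thesis .
        qed
        have h4: "m a de a = m (m a ga a) de (m t ga t)"
        proof -
          have "m a de a = m (m a ga t) de (m a ga t)" by (simp only: h3[symmetric])
          also have "\<dots> = m (m a ga a) de (m t ga t)" by (rule Med) (use tS xy aS cl in auto)
          finally show ?thesis .
        qed
        have "u = m (m a ga a) be (m x de (m t ga t))"
          unfolding u_def h4 by (rule Ag) (use xy aS tS cl in auto)
        hence "u \<in> R" using Rc aa xy cl tS by simp
        thus "a \<in> R" using au Rc xy by simp
      qed
    qed
  next
    assume H: "\<forall>R. right_gamma_ideal S Gam m R \<longrightarrow> gamma_semiprime S Gam m R"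
    show "intra_regular S Gam m"
      unfolding intra_regular_def
    proof
      fix a assume aS: "a \<in> S"
      define A where "A = gprod m {a} Gam {a}"
      define R where "R = A \<union> gprod m A Gam S"
      have AS: "A \<subseteq> S" unfolding A_def gprod_def using cl aS by blast
      have RS: "R \<subseteq> S" unfolding R_def using AS cl by (auto simp: gprod_def)
      have Rne: "R \<noteq> {}" using ne aS unfolding R_def A_def gprod_def by blast
      have Rcl: "gprod m R Gam S \<subseteq> R"
      proof
        fix z assume "z \<in> gprod m R Gam S"
        then obtain r e t where z: "z = m r e t" "r \<in> R" "e \<in> Gam" "t \<in> S"
          unfolding gprod_def by blast
        from z(2) show "z \<in> R"
        proof (unfold R_def, elim UnE)
          assume "r \<in> A" thus "z \<in> A \<union> gprod m A Gam S" using z unfolding gprod_def by blast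
        next
          assume "r \<in> gprod m A Gam S"
          then obtain d g s where r: "r = m (m a d a) g s" "d \<in> Gam" "g \<in> Gam" "s \<in> S"
            unfolding gprod_def A_def by blast
          have "m (m (m a d a) g s) e t = m (m t g s) e (m a d a)"
            by (rule Ls) (use r z aS cl in auto)
          also have "\<dots> = m a e (m (m t g s) d a)" by (rule Ag) (use r z aS cl in auto)
          also have "m (m t g s) d a = m (m a g s) d t" by (rule Ls) (use r z aS cl in auto)
          also have "m a e (m (m a g s) d t) = m (m a g s) e (m a d t)" by (rule Ag) (use r z aS cl in auto)
          also have "\<dots> = m (m a g a) e (m s d t)" by (rule Med) (use r z aS cl in auto)
          finally have "z = m (m a g a) e (m s d t)" using z r by simp
          moreover have "m a g a \<in> A" unfolding A_def gprod_def using r by blast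
          ultimately show "z \<in> A \<union> gprod m A Gam S"
            unfolding gprod_def using z r cl by blast
        qed
      qed
      have "right_gamma_ideal S Gam m R" unfolding right_gamma_ideal_def using Rne RS Rcl by blast
      with H have "gamma_semiprime S Gam m R" by blast
      moreover have "gprod m {a} Gam {a} \<subseteq> R" unfolding R_def A_def by blast
      ultimately have "a \<in> R" using aS unfolding gamma_semiprime_def by blast
      then obtain d g s where ds: "d \<in> Gam" "g \<in> Gam" "s \<in> S" "a = m (m a d a) g s"
      proof (unfold R_def, elim UnE)
        assume "a \<in> A"
        hence "\<exists>d\<in>Gam. a = m a d a" unfolding A_def gprod_def Bex_def by (simp add: conj_commute)
        then obtain d where d: "d \<in> Gam" "a = m a d a" by (elim bexE) (rule that)
        have "a = m (m a d a) d a" by (simp only: d(2)[symmetric])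
        thus ?thesis using that d aS by blast
      next
        assume "a \<in> gprod m A Gam S"
        then obtain r g s where rg: "a = m r g s" "r \<in> A" "g \<in> Gam" "s \<in> S"
          unfolding gprod_def mem_Collect_eq by (elim exE conjE) (rule that)
        from rg(2) obtain d where d: "r = m a d a" "d \<in> Gam"
          unfolding A_def gprod_def mem_Collect_eq singleton_iff by (elim exE conjE) (rule that, simp_all)
        have "a = m (m a d a) g s" unfolding d(1)[symmetric] by (rule rg(1))
        then show ?thesis by (rule that[OF d(2) rg(3) rg(4)])
      qed
      have k: "m a d a = m (m a g s) d (m a d a)"
      proof -
        have "m a d a = m (m (m a d a) g s) d a" by (simp only: ds(4)[symmetric])
        also have "\<dots> = m (m a g s) d (m a d a)" by (rule Ls) (use ds aS cl in auto)
        finally show ?thesis .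
      qed
      have "a = m (m (m a g s) d (m a d a)) g s"
        by (subst k[symmetric]) (rule ds(4))
      moreover have "m a g s \<in> S" using cl aS ds by simp
      ultimately show "\<exists>x\<in>S. \<exists>y\<in>S. \<exists>be\<in>Gam. \<exists>ga\<in>Gam. \<exists>de\<in>Gam.
        a = m (m x be (m a de a)) ga y" using ds by blast
    qed
  qed
qed

end
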